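(* Let $\rho=(r_n)_n$ be an increasing sequence in $[0,1)$ with $r_n\to 1$. For any $f\in\mathcal{U}_A(\mathbb{D},\rho)$ there exists $g\in W$ such that $S_n(f+g)(z)\to\infty$ for $\lambda$-almost every $z\in\mathbb{C}\setminus\overline{\mathbb{D}}$, while $f+g\in\mathcal{U}_A(\mathbb{D},\rho)$.
   Context: $\mathbb{D}$ is the open unit disc, $\mathbb{T}$ the unit circle, $\lambda$ Lebesgue measure on $\mathbb{C}$. $W$ is the Wiener algebra of power series $\sum_k c_kz^k$ with $\sum_k|c_k|<\infty$. For $f(z)=\sum_k a_kz^k\in H(\mathbb{D})$, $S_n(f)(z)=\sum_{k=0}^na_kz^k$. For $f\in H(\mathbb{D})$, $f_r(z):=f(rz)$; $\mathcal{U}_A(\mathbb{D},\rho)$ is the set of $f\in H(\mathbb{D})$ such that for every compact $K\subset\mathbb{T}$, $K\neq\mathbb{T}$, and every continuous $\varphi$ on $K$ there is an increasing sequence $(n_k)$ with $\sup_{\zeta\in K}|f_{r_{n_k}}(\zeta)-\varphi(\zeta)|\to0$. *)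

theory Defs
  imports "HOL-Analysis.Analysis"
begin

definition taylor_coeff :: "(complex \<Rightarrow> complex) \<Rightarrow> nat \<Rightarrow> complex" where
  "taylor_coeff f k = (deriv ^^ k) f 0 / of_nat (fact k)"

definition partial_sum :: "(complex \<Rightarrow> complex) \<Rightarrow> nat \<Rightarrow> complex \<Rightarrow> complex" where
  "partial_sum f n z = (\<Sum>k\<le>n. taylor_coeff f k * z ^ k)"

definition wiener_coeffs :: "(nat \<Rightarrow> complex) set" where
  "wiener_coeffs = {c. summable (\<lambda>k. norm (c k))}"

definition wiener_fun :: "(nat \<Rightarrow> complex) \<Rightarrow> complex \<Rightarrow> complex" where
  "wiener_fun c z = (\<Sum>k. c k * z ^ k)"

definition U_A :: "(nat \<Rightarrow> real) \<Rightarrow> (complex \<Rightarrow> complex) set" where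
  "U_A \<rho> = {f. f holomorphic_on ball 0 1 \<and>
      (\<forall>K \<phi>. compact K \<and> K \<subseteq> sphere 0 1 \<and> K \<noteq> sphere 0 1 \<and> continuous_on K \<phi> \<longrightarrow>
         (\<exists>n::nat \<Rightarrow> nat. strict_mono n \<and>
            uniform_limit K (\<lambda>j \<zeta>. f (complex_of_real (\<rho> (n j)) * \<zeta>)) \<phi> sequentially))}"

end

theory Submission imports Defs "HOL-Complex_Analysis.Complex_Analysis" "HOL-Real_Asymp.Real_Asymp" begin

definition dl :: "nat \<Rightarrow> real" where "dl n = 1 / (real n + 1) ^ 6"
lemma dl_pos: "0 < dl n" by (simp add: dl_def)

definition KK :: "nat \<Rightarrow> nat" where "KK n = (n + 1) ^ 4"

definition Gset :: "(nat \<Rightarrow> complex) \<Rightarrow> nat \<Rightarrow> (nat \<Rightarrow> complex) \<Rightarrow> nat \<Rightarrow> complex set" where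
  "Gset a n d j = {z. norm z < real n} \<inter> {z. 2 * real n < norm z ^ n * dl n} \<inter>
     {z. norm ((\<Sum>k<n. (a k + d k) * z ^ k) + (a n + of_real (real j * dl n)) * z ^ n) \<le> real n}"

lemma Gset_sets: "Gset a n d j \<in> sets lborel"
  unfolding Gset_def sets_lborel
  by (intro sets.Int borel_open borel_closed open_Collect_less closed_Collect_le continuous_intros)

lemma Gset_sub: "Gset a n d j \<subseteq> ball 0 (real n)"
  unfolding Gset_def by auto

lemma Gset_fin: "emeasure lborel (Gset a n d j) < \<infinity>"
  by (rule le_less_trans[OF emeasure_mono[OF Gset_sub] emeasure_bounded_finite]) auto

lemma Gset_disj:
  assumes "j \<noteq> l" shows "Gset a n d j \<inter> Gset a n d l = {}"
proof (rule ccontr)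
  assume "Gset a n d j \<inter> Gset a n d l \<noteq> {}"
  then obtain z where zj: "z \<in> Gset a n d j" and zl: "z \<in> Gset a n d l" by blast
  define Q where "Q = (\<Sum>k<n. (a k + d k) * z ^ k) + a n * z ^ n"
  have 1: "norm (Q + of_real (real j * dl n) * z ^ n) \<le> real n"
    using zj unfolding Gset_def Q_def by (simp add: algebra_simps)
  have 2: "norm (Q + of_real (real l * dl n) * z ^ n) \<le> real n"
    using zl unfolding Gset_def Q_def by (simp add: algebra_simps)
  have gd: "2 * real n < norm z ^ n * dl n" using zj unfolding Gset_def by auto
  have "norm (of_real ((real j - real l) * dl n) * z ^ n) =
        norm ((Q + of_real (real j * dl n) * z ^ n) - (Q + of_real (real l * dl n) * z ^ n))"
    by (simp add: algebra_simps)
  also have "\<dots> \<le> real n + real n"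
    by (rule order_trans[OF norm_triangle_ineq4]) (use 1 2 in auto)
  moreover have "norm (of_real ((real j - real l) * dl n) * z ^ n) = \<bar>real j - real l\<bar> * dl n * norm z ^ n"
    by (simp only: norm_mult norm_of_real norm_power abs_mult abs_of_pos[OF dl_pos])
  ultimately have 3: "\<bar>real j - real l\<bar> * dl n * norm z ^ n \<le> 2 * real n"
    by simp
  have "1 \<le> \<bar>real j - real l\<bar>" using assms by linarith
  moreover have "0 \<le> dl n * norm z ^ n" by (simp add: dl_def)
  ultimately have "dl n * norm z ^ n \<le> \<bar>real j - real l\<bar> * dl n * norm z ^ n"
    using mult_right_mono[of 1 "\<bar>real j - real l\<bar>" "dl n * norm z ^ n"] by (simp add: mult.assoc)
  with 3 gd show False by (simp add: mult.commute)
qed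

lemma pick_ex: "\<exists>j. j < KK n \<and> measure lborel (Gset a n d j) \<le> pi * (real n)^2 / real (KK n)"
proof (rule ccontr)
  assume H: "\<not> ?thesis"
  have K: "KK n > 0" by (simp add: KK_def)
  have "(\<Sum>j<KK n. measure lborel (Gset a n d j)) = measure lborel (\<Union>j<KK n. Gset a n d j)"
    by (rule measure_finite_Union[symmetric])
       (use Gset_fin[of a n d] in \<open>auto simp: Gset_sets[unfolded sets_lborel] disjoint_family_on_def Gset_disj less_top[symmetric]\<close>)
  also have "\<dots> \<le> measure lborel (ball (0::complex) (real n))"
  proof (rule measure_mono_fmeasurable)
    show "(\<Union>j<KK n. Gset a n d j) \<subseteq> ball 0 (real n)" using Gset_sub by blast
    show "(\<Union>j<KK n. Gset a n d j) \<in> sets lborel" using Gset_sets by blast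
    show "ball (0::complex) (real n) \<in> fmeasurable lborel"
      by (auto intro!: fmeasurableI emeasure_bounded_finite)
  qed
  also have "\<dots> = pi * (real n)^2"
    by (simp add: content_ball unit_ball_vol_2)
  also have "\<dots> = (\<Sum>j<KK n. pi * (real n)^2 / real (KK n))"
    using K by simp
  finally have A: "(\<Sum>j<KK n. measure lborel (Gset a n d j)) \<le> (\<Sum>j<KK n. pi * (real n)^2 / real (KK n))" .
  have "(\<Sum>j<KK n. pi * (real n)^2 / real (KK n)) < (\<Sum>j<KK n. measure lborel (Gset a n d j))"
    by (rule sum_strict_mono) (use H K in auto)
  with A show False by simp
qed

definition pick :: "(nat \<Rightarrow> complex) \<Rightarrow> nat \<Rightarrow> (nat \<Rightarrow> complex) \<Rightarrow> nat" where
  "pick a n d = (SOME j. j < KK n \<and> measure lborel (Gset a n d j) \<le> pi * (real n)^2 / real (KK n))"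

lemma pick: "pick a n d < KK n" "measure lborel (Gset a n d (pick a n d)) \<le> pi * (real n)^2 / real (KK n)"
  using someI_ex[OF pick_ex[of n a d]] unfolding pick_def by auto

primrec cs :: "(nat \<Rightarrow> complex) \<Rightarrow> nat \<Rightarrow> nat \<Rightarrow> complex" where
  "cs a 0 = (\<lambda>_. 0)"
| "cs a (Suc n) = (cs a n)(n := of_real (real (pick a n (cs a n)) * dl n))"

definition cc :: "(nat \<Rightarrow> complex) \<Rightarrow> nat \<Rightarrow> complex" where "cc a k = cs a (Suc k) k"

lemma cs_cc: "k < m \<Longrightarrow> cs a m k = cc a k"
proof (induction m)
  case 0 then show ?case by simp
next
  case (Suc m)
  then show ?case unfolding cc_def by (cases "k = m") auto
qed

lemma cc_eq: "cc a n = of_real (real (pick a n (cs a n)) * dl n)"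
  unfolding cc_def by simp

lemma cc_bound: "norm (cc a n) \<le> 1 / (real n + 1) ^ 2"
proof -
  have "real (pick a n (cs a n)) \<le> (real n + 1) ^ 4"
    using pick(1)[of a n "cs a n"] unfolding KK_def
    by (metis less_imp_le of_nat_1 of_nat_add of_nat_le_iff of_nat_power)
  then have "real (pick a n (cs a n)) * dl n \<le> (real n + 1) ^ 4 * dl n"
    by (intro mult_right_mono) (auto simp: dl_def)
  also have "\<dots> = 1 / (real n + 1) ^ 2"
    by (simp add: dl_def field_simps)
  finally show ?thesis
    by (simp only: cc_eq norm_of_real abs_of_nonneg[OF mult_nonneg_nonneg[OF of_nat_0_le_iff less_imp_le[OF dl_pos]]])
qed

lemma summable_inv_sq: "summable (\<lambda>n. 1 / (real n + 1) ^ 2)"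
proof -
  have "summable (\<lambda>n. inverse (real n ^ 2))" by (rule inverse_power_summable) simp
  then have "summable (\<lambda>n. inverse (real (Suc n) ^ 2))"
    using summable_Suc_iff[of "\<lambda>n. inverse (real n ^ 2)"] by simp
  then show ?thesis by (simp add: inverse_eq_divide add.commute)
qed

lemma cc_summable: "summable (\<lambda>k. norm (cc a k))"
  by (rule summable_comparison_test[OF _ summable_inv_sq]) (auto intro: cc_bound)

lemma core:
  "AE z in lborel. 1 < norm z \<longrightarrow>
     filterlim (\<lambda>n. \<Sum>k\<le>n. (a k + cc a k) * z ^ k) at_infinity sequentially"
proof -
  define A where "A n = Gset a n (cs a n) (pick a n (cs a n))" for n
  have mA: "\<And>n. A n \<in> sets lborel" unfolding A_def by (rule Gset_sets)
  have fA: "\<And>n. emeasure lborel (A n) < \<infinity>" unfolding A_def by (rule Gset_fin)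
  have bA: "measure lborel (A n) \<le> pi / (real n + 1) ^ 2" for n
  proof -
    have "measure lborel (A n) \<le> pi * (real n)^2 / real (KK n)" unfolding A_def by (rule pick)
    also have "\<dots> = (pi * (real n)^2 / (real n + 1)^2) / (real n + 1)^2"
      by (simp add: KK_def divide_divide_eq_left power_add[symmetric] add.commute)
    also have "\<dots> \<le> pi / (real n + 1) ^ 2"
    proof (rule divide_right_mono)
      have A: "0 < (real n + 1)^2" by simp
      have "(real n)^2 \<le> (real n + 1)^2" by (intro power_mono) auto
      then have "pi * (real n)^2 \<le> pi * (real n + 1)^2" by (intro mult_left_mono) auto
      then show "pi * (real n)^2 / (real n + 1)^2 \<le> pi" using A by (simp add: divide_le_eq)
    qed simp
    finally show ?thesis .
  qed
  have sA: "summable (\<lambda>n. measure lborel (A n))"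
  proof (rule summable_comparison_test[OF _ summable_mult[OF summable_inv_sq, of pi]])
    show "\<exists>N. \<forall>n\<ge>N. norm (measure lborel (A n)) \<le> pi * (1 / (real n + 1) ^ 2)"
      using bA by simp
  qed
  have ae: "AE z in lborel. eventually (\<lambda>n. z \<in> space lborel - A n) sequentially"
    by (rule borel_cantelli_AE1[OF mA fA sA])
  show ?thesis
  proof (rule AE_mp[OF ae], intro AE_I2 impI)
    fix z :: complex
    assume ev: "eventually (\<lambda>n. z \<in> space lborel - A n) sequentially" and z1: "1 < norm z"
    have gen2: "eventually (\<lambda>n. 2 * real n * (real n + 1)^6 < r ^ n) sequentially" if "1 < r" for r :: real
      using that by real_asymp
    have gen3: "eventually (\<lambda>n. r < real n) sequentially" for r :: real
      by real_asymp
    have ev2: "eventually (\<lambda>n. 2 * real n * (real n + 1)^6 < norm z ^ n) sequentially"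
      using gen2[OF z1] .
    have ev3: "eventually (\<lambda>n. norm z < real n) sequentially"
      using gen3 .
    have ev4: "eventually (\<lambda>n. real n < norm (\<Sum>k\<le>n. (a k + cc a k) * z ^ k)) sequentially"
      using ev ev2 ev3
    proof eventually_elim
      case (elim n)
      have gd: "2 * real n < norm z ^ n * dl n"
        using elim(2) by (simp add: dl_def field_simps)
      have "z \<notin> A n" using elim(1) by simp
      then have "\<not> norm ((\<Sum>k<n. (a k + cs a n k) * z ^ k) + (a n + of_real (real (pick a n (cs a n)) * dl n)) * z ^ n) \<le> real n"
        using gd elim(3) unfolding A_def Gset_def by auto
      moreover have "(\<Sum>k<n. (a k + cs a n k) * z ^ k) = (\<Sum>k<n. (a k + cc a k) * z ^ k)"
        by (intro sum.cong) (auto simp: cs_cc)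
      moreover have "(\<Sum>k\<le>n. (a k + cc a k) * z ^ k) = (\<Sum>k<n. (a k + cc a k) * z ^ k) + (a n + cc a n) * z ^ n"
        by (simp add: lessThan_Suc_atMost[symmetric])
      ultimately show ?case by (simp add: cc_eq)
    qed
    show "filterlim (\<lambda>n. \<Sum>k\<le>n. (a k + cc a k) * z ^ k) at_infinity sequentially"
      unfolding filterlim_at_infinity[OF order_refl]
    proof (intro allI impI)
      fix r :: real assume "0 < r"
      have "eventually (\<lambda>n. r \<le> real n) sequentially" using gen3[of r] by eventually_elim simp
      with ev4 show "eventually (\<lambda>n. r \<le> norm (\<Sum>k\<le>n. (a k + cc a k) * z ^ k)) sequentially"
        by eventually_elim auto
    qed
  qed
qed


lemma wiener_props:
  assumes c: "summable (\<lambda>k. norm (c k))"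
  shows "wiener_fun c holomorphic_on ball 0 1"
    and "\<And>n. (deriv ^^ n) (wiener_fun c) 0 / fact n = c n"
    and "continuous_on (cball 0 1) (wiener_fun c)"
proof -
  define F where "F = Abs_fps c"
  have ev: "eval_fps F = wiener_fun c"
    by (auto simp: F_def eval_fps_def wiener_fun_def fun_eq_iff)
  have "summable (\<lambda>n. c n * 1 ^ n)" using summable_norm_cancel[OF c] by simp
  then have r: "fps_conv_radius F \<ge> 1"
    using conv_radius_geI[of c 1] by (simp add: fps_conv_radius_def F_def one_ereal_def)
  show "wiener_fun c holomorphic_on ball 0 1"
    unfolding ev[symmetric]
  proof (rule holomorphic_on_eval_fps, rule subsetI)
    fix x :: complex assume "x \<in> ball 0 1"
    then have "ereal (norm x) < 1" by (simp add: one_ereal_def)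
    then have "ereal (norm x) < fps_conv_radius F" using r by (rule less_le_trans)
    then show "x \<in> eball 0 (fps_conv_radius F)" by simp
  qed
  show "(deriv ^^ n) (wiener_fun c) 0 / fact n = c n" for n
  proof -
    have r0: "0 < fps_conv_radius F" by (rule less_le_trans[OF _ r]) simp
    show ?thesis using fps_nth_conv_deriv[OF r0, of n] unfolding ev by (simp add: F_def)
  qed
  have ul: "uniform_limit (cball 0 1) (\<lambda>n x. \<Sum>i<n. c i * x ^ i) (\<lambda>x. suminf (\<lambda>i. c i * x ^ i)) sequentially"
  proof (rule Weierstrass_m_test[OF _ c])
    fix n and x :: complex assume "x \<in> cball 0 1"
    then have "norm x ^ n \<le> 1" by (simp add: power_le_one)
    then show "norm (c n * x ^ n) \<le> norm (c n)"
      by (simp add: norm_mult norm_power mult_left_le)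
  qed
  show "continuous_on (cball 0 1) (wiener_fun c)"
    unfolding wiener_fun_def
    by (rule uniform_limit_theorem[OF _ ul]) (auto intro!: always_eventually continuous_intros)
qed

theorem proposition4p9:
  fixes \<rho> :: "nat \<Rightarrow> real" and f :: "complex \<Rightarrow> complex"
  assumes "incseq \<rho>" and "\<And>n. 0 \<le> \<rho> n \<and> \<rho> n < 1" and "\<rho> \<longlonglongrightarrow> 1"
    and "f \<in> U_A \<rho>"
  shows "\<exists>c \<in> wiener_coeffs.
     (AE z in lborel. z \<notin> cball 0 1 \<longrightarrow>
        filterlim (\<lambda>n. partial_sum (\<lambda>w. f w + wiener_fun c w) n z) at_infinity sequentially)
     \<and> (\<lambda>w. f w + wiener_fun c w) \<in> U_A \<rho>"
proof -
  define a where "a = taylor_coeff f"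
  define c where "c = cc a"
  have cs: "summable (\<lambda>k. norm (c k))" unfolding c_def by (rule cc_summable)
  define g where "g = wiener_fun c"
  have fh: "f holomorphic_on ball 0 1" using assms(4) by (simp add: U_A_def)
  note gp = wiener_props[OF cs, folded g_def]
  have tc: "taylor_coeff (\<lambda>w. f w + g w) k = a k + c k" for k
  proof -
    have "(deriv ^^ k) (\<lambda>w. f w + g w) 0 = (deriv ^^ k) f 0 + (deriv ^^ k) g 0"
      by (rule higher_deriv_add[OF fh gp(1)]) auto
    then show ?thesis
      using gp(2)[of k] unfolding taylor_coeff_def a_def
      by (simp add: add_divide_distrib)
  qed
  have ps: "partial_sum (\<lambda>w. f w + g w) n z = (\<Sum>k\<le>n. (a k + cc a k) * z ^ k)" for n z
    unfolding partial_sum_def tc c_def ..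
  have AEpart: "AE z in lborel. z \<notin> cball 0 1 \<longrightarrow>
        filterlim (\<lambda>n. partial_sum (\<lambda>w. f w + g w) n z) at_infinity sequentially"
    using core[of a] by eventually_elim (auto simp: ps)
  have UApart: "(\<lambda>w. f w + g w) \<in> U_A \<rho>"
    unfolding U_A_def
  proof (intro CollectI conjI allI impI)
    show "(\<lambda>w. f w + g w) holomorphic_on ball 0 1"
      using fh gp(1) by (rule holomorphic_on_add)
    fix K :: "complex set" and \<phi> :: "complex \<Rightarrow> complex"
    assume H: "compact K \<and> K \<subseteq> sphere 0 1 \<and> K \<noteq> sphere 0 1 \<and> continuous_on K \<phi>"
    have Kc: "K \<subseteq> cball 0 1" using H sphere_cball by blast
    have "continuous_on K (\<lambda>z. \<phi> z - g z)"
      using H continuous_on_subset[OF gp(3) Kc] by (intro continuous_intros) auto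
    then obtain n where n: "strict_mono n"
      and ul: "uniform_limit K (\<lambda>j \<zeta>. f (complex_of_real (\<rho> (n j)) * \<zeta>)) (\<lambda>z. \<phi> z - g z) sequentially"
      using assms(4) H unfolding U_A_def by blast
    have ug: "uniform_limit K (\<lambda>j \<zeta>. g (complex_of_real (\<rho> (n j)) * \<zeta>)) g sequentially"
      unfolding uniform_limit_iff
    proof (intro allI impI)
      fix e :: real assume e: "0 < e"
      have "uniformly_continuous_on (cball 0 1) g"
        using gp(3) by (rule compact_uniformly_continuous) simp
      then obtain d where d: "d > 0"
        and dd: "\<And>x y. x \<in> cball 0 1 \<Longrightarrow> y \<in> cball 0 1 \<Longrightarrow> dist y x < d \<Longrightarrow> dist (g y) (g x) < e"
        using e unfolding uniformly_continuous_on_def by metis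
      have "(\<lambda>j. \<rho> (n j)) \<longlonglongrightarrow> 1"
        using LIMSEQ_subseq_LIMSEQ[OF assms(3) n] by (simp add: o_def)
      then have "eventually (\<lambda>j. dist (\<rho> (n j)) 1 < d) sequentially"
        using d by (rule tendstoD)
      then show "eventually (\<lambda>j. \<forall>\<zeta>\<in>K. dist (g (complex_of_real (\<rho> (n j)) * \<zeta>)) (g \<zeta>) < e) sequentially"
      proof eventually_elim
        case (elim j)
        show ?case
        proof
          fix \<zeta> assume z: "\<zeta> \<in> K"
          then have nz: "norm \<zeta> = 1" using H by auto
          have r: "0 \<le> \<rho> (n j)" "\<rho> (n j) < 1" using assms(2) by auto
          define t where "t = \<rho> (n j)"
          have "complex_of_real t * \<zeta> - \<zeta> = complex_of_real (t - 1) * \<zeta>"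
            by (simp add: algebra_simps)
          then have "dist (complex_of_real t * \<zeta>) \<zeta> = norm (complex_of_real (t - 1) * \<zeta>)"
            by (simp add: dist_norm)
          also have "\<dots> = \<bar>t - 1\<bar>" by (simp only: norm_mult nz norm_of_real mult_1_right)
          also have "\<dots> = dist t 1" by (simp add: dist_real_def)
          finally have "dist (complex_of_real (\<rho> (n j)) * \<zeta>) \<zeta> < d" using elim by (simp add: t_def)
          moreover have "complex_of_real (\<rho> (n j)) * \<zeta> \<in> cball 0 1"
            using r nz by (simp add: norm_mult)
          moreover have "\<zeta> \<in> cball 0 1" using nz by simp
          ultimately show "dist (g (complex_of_real (\<rho> (n j)) * \<zeta>)) (g \<zeta>) < e"
            using dd by blast
        qed
      qed
    qed
    have "uniform_limit K (\<lambda>j \<zeta>. f (complex_of_real (\<rho> (n j)) * \<zeta>) + g (complex_of_real (\<rho> (n j)) * \<zeta>))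
            (\<lambda>z. (\<phi> z - g z) + g z) sequentially"
      by (rule uniform_limit_add[OF ul ug])
    then have "uniform_limit K (\<lambda>j \<zeta>. f (complex_of_real (\<rho> (n j)) * \<zeta>) + g (complex_of_real (\<rho> (n j)) * \<zeta>)) \<phi> sequentially"
      by simp
    then show "\<exists>n. strict_mono n \<and> uniform_limit K (\<lambda>j \<zeta>. f (complex_of_real (\<rho> (n j)) * \<zeta>) + g (complex_of_real (\<rho> (n j)) * \<zeta>)) \<phi> sequentially"
      using n by blast
  qed
  show ?thesis
    using AEpart UApart cs unfolding g_def wiener_coeffs_def by blast
qed

end
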